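(* Let $c_1 = \frac{\sqrt5-1}{2}$. Let $g$ be a fixed real polynomial with $g(c_1)g(-c_1)>0$ and let $h > 0$. Then there exists $n_0$ (depending only on $g$ and $h$) such that for every integer polynomial $f$ all of whose coefficients are at most $h$ in absolute value, and every $n \geq n_0$, the polynomial $P_n(x) = f(x)x^n + g(x)$ satisfies $P_n(c_1)P_n(-c_1) > 0$. *)

theory Defs
  imports "HOL-Computational_Algebra.Polynomial" Complex_Main
begin

definition c1 :: real where "c1 = (sqrt 5 - 1) / 2"

end

theory Submission
  imports Defs
begin

lemma c1_bounds: "0 < c1" "c1 < 1"
proof -
  have a: "sqrt 5 > 1" by (rule real_less_rsqrt) simp
  have b: "sqrt 5 < 3" by (rule real_less_lsqrt) simp_all
  show "0 < c1" "c1 < 1" using a b unfolding c1_def by auto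
qed

lemma poly_bound:
  fixes f :: "int poly" and x h :: real
  assumes hc: "\<forall>i. \<bar>real_of_int (coeff f i)\<bar> \<le> h" and x: "\<bar>x\<bar> \<le> c1" and h: "h > 0"
  shows "\<bar>poly (map_poly real_of_int f) x\<bar> \<le> h / (1 - c1)"
proof -
  let ?F = "map_poly real_of_int f"
  have "\<bar>poly ?F x\<bar> = \<bar>\<Sum>i\<le>degree ?F. coeff ?F i * x ^ i\<bar>" by (simp add: poly_altdef)
  also have "\<dots> \<le> (\<Sum>i\<le>degree ?F. \<bar>coeff ?F i * x ^ i\<bar>)" by (rule sum_abs)
  also have "\<dots> \<le> (\<Sum>i\<le>degree ?F. h * c1 ^ i)"
  proof (rule sum_mono)
    fix i
    have "\<bar>coeff ?F i\<bar> \<le> h" using hc by (simp add: coeff_map_poly)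
    moreover have "\<bar>x ^ i\<bar> \<le> c1 ^ i" using x by (simp add: power_abs power_mono)
    ultimately show "\<bar>coeff ?F i * x ^ i\<bar> \<le> h * c1 ^ i"
      by (simp add: abs_mult mult_mono)
  qed
  also have "\<dots> = h * (\<Sum>i<Suc (degree ?F). c1 ^ i)" by (simp add: sum_distrib_left lessThan_Suc_atMost)
  also have "\<dots> = h * ((1 - c1 ^ Suc (degree ?F)) / (1 - c1))"
    using c1_bounds by (subst sum_gp_strict) simp
  also have "\<dots> \<le> h * (1 / (1 - c1))"
    using c1_bounds h by (intro mult_left_mono divide_right_mono) auto
  finally show ?thesis by simp
qed

lemma sign_lemma:
  fixes a b c d :: real
  assumes "\<bar>a\<bar> < \<bar>b\<bar>" "\<bar>c\<bar> < \<bar>d\<bar>" "b * d > 0"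
  shows "(a + b) * (c + d) > 0"
proof -
  have "b > 0 \<and> d > 0 \<or> b < 0 \<and> d < 0" using assms(3) by (simp add: zero_less_mult_iff)
  then show ?thesis
  proof
    assume "b > 0 \<and> d > 0"
    then have "a + b > 0" "c + d > 0" using assms(1,2) by linarith+
    then show ?thesis by simp
  next
    assume "b < 0 \<and> d < 0"
    then have "a + b < 0" "c + d < 0" using assms(1,2) by linarith+
    then show ?thesis by (simp add: mult_neg_neg)
  qed
qed

theorem lemma3p3:
  fixes g :: "real poly" and h :: real
  assumes "poly g c1 * poly g (- c1) > 0"
    and "h > 0"
  shows "\<exists>n0::nat. \<forall>f :: int poly. (\<forall>i. \<bar>real_of_int (coeff f i)\<bar> \<le> h) \<longrightarrow>
           (\<forall>n\<ge>n0. let P = map_poly real_of_int f * monom 1 n + g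
                     in poly P c1 * poly P (- c1) > 0)"
proof -
  define m where "m = min \<bar>poly g c1\<bar> \<bar>poly g (- c1)\<bar>"
  define B where "B = h / (1 - c1)"
  have m: "m > 0" using assms(1) unfolding m_def by (auto simp: zero_less_mult_iff)
  have B: "B > 0" using c1_bounds assms(2) unfolding B_def by simp
  obtain n0 where n0: "c1 ^ n0 < m / B" using real_arch_pow_inv[of "m / B" c1] m B c1_bounds by auto
  show ?thesis
  proof (intro exI allI impI)
    fix f :: "int poly" and n assume hc: "\<forall>i. \<bar>real_of_int (coeff f i)\<bar> \<le> h" and nn: "n0 \<le> n"
    let ?F = "map_poly real_of_int f"
    have cn: "c1 ^ n \<le> c1 ^ n0" using c1_bounds nn by (simp add: power_decreasing)
    have key: "\<bar>poly ?F x * x ^ n\<bar> < m" if x: "\<bar>x\<bar> = c1" for x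
    proof -
      have "\<bar>poly ?F x * x ^ n\<bar> = \<bar>poly ?F x\<bar> * c1 ^ n" using x by (simp add: abs_mult power_abs)
      also have "\<dots> \<le> B * c1 ^ n" using poly_bound[OF hc _ assms(2)] x c1_bounds
        unfolding B_def by (intro mult_right_mono) auto
      also have "\<dots> \<le> B * c1 ^ n0" using cn B by simp
      also have "\<dots> < B * (m / B)" using mult_strict_left_mono[OF n0 B] .
      also have "\<dots> = m" using B by simp
      finally show ?thesis .
    qed
    have k1: "\<bar>poly ?F c1 * c1 ^ n\<bar> < \<bar>poly g c1\<bar>" using key[of c1] c1_bounds unfolding m_def by auto
    have k2: "\<bar>poly ?F (- c1) * (- c1) ^ n\<bar> < \<bar>poly g (- c1)\<bar>" using key[of "- c1"] c1_bounds unfolding m_def by auto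
    show "let P = ?F * monom 1 n + g in poly P c1 * poly P (- c1) > 0"
      using sign_lemma[OF k1 k2 assms(1)] by (simp add: poly_monom)
  qed
qed

end
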